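(* Suppose $U$ satisfies the Main Assumption and $\mu$ is strictly increasing in its $i$-th argument for some index $i$ (i.e. $\mu(\lambda+te_i)>\mu(\lambda)$ for all $\lambda\in\mathbb{R}^n_+$, $t>0$). Then for every extremal of problem (P) whose representation in Theorem 1 has $A_i=0$, we have $x_i\equiv y_i\equiv0$ (regardless of whether $\gamma=0$ or not).
   Context: Setting of Theorem 1: problem (P) on $\mathbb{H}_{2n+1}$ of minimizing $T$ over Lipschitz curves $(x,y,z)$ with $(x,y,z)(0)=0$, $(\dot x,\dot y)\in U$ a.e., $\dot z=\frac12\sum_i(x_i\dot y_i-\dot x_iy_i)$; extremal = projection of a Pontryagin maximum principle solution. Main Assumption: $U=\{(\dot x,\dot y):\mu(\mu_{\Omega_1}(\dot x_1,\dot y_1),\dots,\mu_{\Omega_n}(\dot x_n,\dot y_n))\le1\}$ with $\Omega_i\subset\mathbb{R}^2$ compact convex, $0\in\operatorname{int}\Omega_i$, $\mu_\Omega$ the Minkowski functional, and $\mu:\mathbb{R}^n_+\to\mathbb{R}_+$ continuous, convex, positively homogeneous, nondecreasing in each argument, positive outside $0$. Theorem 1 associates to each extremal constants $\gamma\in\{0,\pm1\}$, $A\in\mathbb{R}^n_+$ not both zero, with $A_i=s_{\Omega_i}(h_i,g_i)$ where $h_i=\varphi_i-\frac12\gamma y_i$, $g_i=\psi_i+\frac12\gamma x_i$ are built from the PMP covector $(\varphi,\psi,\gamma)$, and a measurable $\lambda(t)\in\arg\max_{\lambda\in\Xi}\sum_jA_j\lambda_j$, $\Xi=\{\lambda\in\mathbb{R}^n_+:\mu(\lambda)\le1\}$,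 with $\mu_{\Omega_i}(\dot x_i,\dot y_i)=\lambda_i(t)$. *)

theory Defs
  imports "HOL-Analysis.Analysis"
begin

text \<open>Nonnegative orthant R^n_+ (index type 'n plays the role of {1..n}).\<close>
definition nonneg_orthant :: "(real^'n) set" where
  "nonneg_orthant = {l. \<forall>j. 0 \<le> l $ j}"

definition minkowski_fun :: "(real \<times> real) set \<Rightarrow> real \<times> real \<Rightarrow> real" where
  "minkowski_fun \<Omega> w = Inf {r. 0 < r \<and> w \<in> (\<lambda>p. r *\<^sub>R p) ` \<Omega>}"

definition support_fun :: "(real \<times> real) set \<Rightarrow> real \<times> real \<Rightarrow> real" where
  "support_fun \<Omega> v = (SUP p\<in>\<Omega>. v \<bullet> p)"

definition main_assumption :: "('n \<Rightarrow> (real \<times> real) set) \<Rightarrow> (real^'n \<Rightarrow> real) \<Rightarrow> bool" where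
  "main_assumption \<Omega> \<mu> \<longleftrightarrow>
     (\<forall>j. compact (\<Omega> j) \<and> convex (\<Omega> j) \<and> (0::real\<times>real) \<in> interior (\<Omega> j)) \<and>
     continuous_on nonneg_orthant \<mu> \<and>
     convex_on nonneg_orthant \<mu> \<and>
     (\<forall>l\<in>nonneg_orthant. 0 \<le> \<mu> l) \<and>
     (\<forall>l\<in>nonneg_orthant. \<forall>t\<ge>0. \<mu> (t *\<^sub>R l) = t * \<mu> l) \<and>
     (\<forall>l\<in>nonneg_orthant. \<forall>j. \<forall>t\<ge>0. \<mu> l \<le> \<mu> (l + t *\<^sub>R axis j 1)) \<and>
     (\<forall>l\<in>nonneg_orthant. l \<noteq> 0 \<longrightarrow> 0 < \<mu> l)"

definition control_set :: "('n \<Rightarrow> (real \<times> real) set) \<Rightarrow> (real^'n \<Rightarrow> real) \<Rightarrow> ((real^'n) \<times> (real^'n)) set" where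
  "control_set \<Omega> \<mu> = {(a, b). \<mu> (\<chi> j. minkowski_fun (\<Omega> j) (a $ j, b $ j)) \<le> 1}"

definition admissible :: "('n \<Rightarrow> (real \<times> real) set) \<Rightarrow> (real^'n \<Rightarrow> real) \<Rightarrow> real
    \<Rightarrow> (real \<Rightarrow> real^'n) \<Rightarrow> (real \<Rightarrow> real^'n) \<Rightarrow> (real \<Rightarrow> real) \<Rightarrow> bool" where
  "admissible \<Omega> \<mu> T x y z \<longleftrightarrow>
     0 \<le> T \<and>
     (\<exists>L. L-lipschitz_on {0..T} x) \<and> (\<exists>L. L-lipschitz_on {0..T} y) \<and> (\<exists>L. L-lipschitz_on {0..T} z) \<and>
     x 0 = 0 \<and> y 0 = 0 \<and> z 0 = 0 \<and>
     (AE t in lebesgue. t \<in> {0..T} \<longrightarrow>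
        x differentiable (at t within {0..T}) \<and>
        y differentiable (at t within {0..T}) \<and>
        z differentiable (at t within {0..T}) \<and>
        (vector_derivative x (at t within {0..T}), vector_derivative y (at t within {0..T}))
           \<in> control_set \<Omega> \<mu> \<and>
        vector_derivative z (at t within {0..T}) =
           (1/2) * (\<Sum>j\<in>UNIV. x t $ j * vector_derivative y (at t within {0..T}) $ j
                               - vector_derivative x (at t within {0..T}) $ j * y t $ j))"

definition hamiltonian :: "real^'n \<Rightarrow> real^'n \<Rightarrow> real \<Rightarrow> real^'n \<Rightarrow> real^'n \<Rightarrow> real^'n \<Rightarrow> real^'n \<Rightarrow> real" where
  "hamiltonian \<phi> \<psi> \<gamma> x y a b =
     \<phi> \<bullet> a + \<psi> \<bullet> b + \<gamma> * ((1/2) * (\<Sum>j\<in>UNIV. x $ j * b $ j - a $ j * y $ j))"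

text \<open>Solution of the Pontryagin maximum principle for the time-optimal problem (P):
  admissible trajectory (x,y,z) on [0,T] and a nonvanishing covector (\<phi>,\<psi>,\<gamma>);
  the z-component \<gamma> is constant since H does not depend on z.\<close>
definition pmp_solution :: "('n \<Rightarrow> (real \<times> real) set) \<Rightarrow> (real^'n \<Rightarrow> real) \<Rightarrow> real
    \<Rightarrow> (real \<Rightarrow> real^'n) \<Rightarrow> (real \<Rightarrow> real^'n) \<Rightarrow> (real \<Rightarrow> real)
    \<Rightarrow> (real \<Rightarrow> real^'n) \<Rightarrow> (real \<Rightarrow> real^'n) \<Rightarrow> real \<Rightarrow> bool" where
  "pmp_solution \<Omega> \<mu> T x y z \<phi> \<psi> \<gamma> \<longleftrightarrow>
     admissible \<Omega> \<mu> T x y z \<and>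
     (\<exists>L. L-lipschitz_on {0..T} \<phi>) \<and> (\<exists>L. L-lipschitz_on {0..T} \<psi>) \<and>
     (\<forall>t\<in>{0..T}. \<phi> t \<noteq> 0 \<or> \<psi> t \<noteq> 0 \<or> \<gamma> \<noteq> 0) \<and>
     (AE t in lebesgue. t \<in> {0..T} \<longrightarrow>
        (\<phi> has_vector_derivative (- (\<gamma>/2) *\<^sub>R vector_derivative y (at t within {0..T}))) (at t within {0..T}) \<and>
        (\<psi> has_vector_derivative ((\<gamma>/2) *\<^sub>R vector_derivative x (at t within {0..T}))) (at t within {0..T})) \<and>
     (\<exists>c\<ge>0. AE t in lebesgue. t \<in> {0..T} \<longrightarrow>
        hamiltonian (\<phi> t) (\<psi> t) \<gamma> (x t) (y t)
           (vector_derivative x (at t within {0..T})) (vector_derivative y (at t within {0..T})) = c \<and>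
        (\<forall>(a, b)\<in>control_set \<Omega> \<mu>.
           hamiltonian (\<phi> t) (\<psi> t) \<gamma> (x t) (y t) a b \<le>
           hamiltonian (\<phi> t) (\<psi> t) \<gamma> (x t) (y t)
             (vector_derivative x (at t within {0..T})) (vector_derivative y (at t within {0..T}))))"

end

theory Submission
  imports Defs
begin


lemma sard_real:
  fixes f :: "real \<Rightarrow> real" and G :: "real set"
  assumes "\<And>t. t \<in> G \<Longrightarrow> (f has_derivative (\<lambda>h. 0)) (at t within G)"
  shows "negligible (f ` G)"
proof -
  let ?F = "\<lambda>v::real^1. vec (f (v $ 1)) :: real^1"
  have der: "(?F has_derivative (\<lambda>h. 0)) (at v within vec ` G)" if vG: "v \<in> vec ` G" for v
  proof -
    obtain t where t: "t \<in> G" "v = vec t" using vG by auto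
    have "(f has_derivative (\<lambda>x. x * 0)) (at t within G)" using assms[OF t(1)] by simp
    moreover have "((*\<^sub>R) (0::real) :: real^1 \<Rightarrow> real^1) = (\<lambda>h. 0)" by auto
    ultimately show ?thesis using has_derivative_vector_1 t by metis
  qed
  have neg1: "negligible (?F ` vec ` G)"
    by (rule baby_Sard[where f' = "\<lambda>_ _. 0"]) (use der in \<open>auto simp add: matrix_eq rank_eq_0\<close>)
  have "negligible ((\<lambda>v::real^1. v $ 1) ` (?F ` vec ` G))"
  proof (rule negligible_differentiable_image_negligible)
    show "DIM(real^1) \<le> DIM(real)" by simp
    show "(\<lambda>v::real^1. v $ 1) differentiable_on ?F ` vec ` G"
      by (rule bounded_linear_imp_differentiable_on[OF bounded_linear_vec_nth])
  qed (rule neg1)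
  moreover have "(\<lambda>v::real^1. v $ 1) ` (?F ` vec ` G) = f ` G"
    by (auto simp: image_image)
  ultimately show ?thesis by simp
qed

lemma zero_deriv_const:
  fixes f :: "real \<Rightarrow> real"
  assumes L: "L-lipschitz_on {0..T} f" and N: "negligible N"
    and d: "\<And>t. t \<in> {0..T} - N \<Longrightarrow> (f has_derivative (\<lambda>h. 0)) (at t within {0..T})"
    and t: "t \<in> {0..T}"
  shows "f t = f 0"
proof (rule ccontr)
  assume ne: "f t \<noteq> f 0"
  let ?G = "{0..T} - N"
  have n1: "negligible (f ` ?G)"
    by (rule sard_real) (use d in \<open>auto intro: has_derivative_subset\<close>)
  have n2: "negligible (f ` ({0..T} \<inter> N))"
  proof (rule negligible_locally_Lipschitz_image)
    show "negligible ({0..T} \<inter> N)" using N by (rule negligible_subset) auto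
    show "\<exists>U B. open U \<and> x \<in> U \<and> (\<forall>y\<in>{0..T} \<inter> N \<inter> U. norm (f y - f x) \<le> B * norm (y - x))"
      if "x \<in> {0..T} \<inter> N" for x
      using that lipschitz_on_normD[OF L] by (intro exI[of _ UNIV] exI[of _ L]) auto
  qed simp
  have "f ` {0..T} \<subseteq> f ` ?G \<union> f ` ({0..T} \<inter> N)" by auto
  then have neg: "negligible (f ` {0..T})"
    using n1 n2 negligible_Un negligible_subset by metis
  have conn: "connected (f ` {0..T})"
    by (rule connected_continuous_image[OF lipschitz_on_continuous_on[OF L]]) simp
  have t0: "f 0 \<in> f ` {0..T}" "f t \<in> f ` {0..T}" using t by auto
  have "{min (f 0) (f t)..max (f 0) (f t)} \<subseteq> f ` {0..T}"
    using connected_contains_Icc[OF conn] t0 by (auto simp: min_def max_def)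
  then have "negligible (cbox (min (f 0) (f t)) (max (f 0) (f t)))"
    using neg negligible_subset by (metis cbox_interval)
  then have "box (min (f 0) (f t)) (max (f 0) (f t)) = {}"
    using negligible_interval(1) by blast
  moreover have "(min (f 0) (f t) + max (f 0) (f t))/2 \<in> box (min (f 0) (f t)) (max (f 0) (f t))"
    using ne by (auto simp: box_real min_def max_def)
  ultimately show False by blast
qed

lemma mk_set_ne:
  assumes "(0::real\<times>real) \<in> interior \<Omega>"
  shows "\<exists>r. 0 < r \<and> w \<in> (\<lambda>p. r *\<^sub>R p) ` \<Omega>"
proof -
  obtain e where e: "e > 0" "ball 0 e \<subseteq> \<Omega>" using assms by (meson mem_interior)
  define r where "r = (norm w + 1) / e"
  have r: "r > 0" unfolding r_def using e norm_ge_zero[of w] by (intro divide_pos_pos) linarith+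
  have "norm ((1/r) *\<^sub>R w) = norm w * e / (norm w + 1)"
    using e r norm_ge_zero[of w] by (simp add: r_def)
  also have "\<dots> < e"
  proof -
    have np: "norm w + 1 > 0" using norm_ge_zero[of w] by linarith
    have "norm w * e < e * (norm w + 1)" using e by (simp add: algebra_simps)
    then show ?thesis using np by (simp add: divide_less_eq)
  qed
  finally have "(1/r) *\<^sub>R w \<in> \<Omega>" using e by auto
  moreover have "w = r *\<^sub>R ((1/r) *\<^sub>R w)" using r by simp
  ultimately show ?thesis using r by blast
qed

lemma mk_nonneg:
  assumes "(0::real\<times>real) \<in> interior \<Omega>"
  shows "0 \<le> minkowski_fun \<Omega> w"
  unfolding minkowski_fun_def
  by (rule cInf_greatest) (use mk_set_ne[OF assms] in auto)

lemma mk_zero: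
  assumes "(0::real\<times>real) \<in> interior \<Omega>"
  shows "minkowski_fun \<Omega> 0 = 0"
proof -
  have "0 \<in> \<Omega>" using assms interior_subset by blast
  then have "{r. 0 < r \<and> (0::real\<times>real) \<in> (\<lambda>p. r *\<^sub>R p) ` \<Omega>} = {0<..}"
    by (auto intro!: image_eqI[where x=0])
  then show ?thesis unfolding minkowski_fun_def by simp
qed

lemma mk_pos:
  assumes "(0::real\<times>real) \<in> interior \<Omega>" "bounded \<Omega>" "w \<noteq> 0"
  shows "0 < minkowski_fun \<Omega> w"
proof -
  obtain B where B: "B > 0" "\<And>p. p \<in> \<Omega> \<Longrightarrow> norm p \<le> B"
    using assms(2) bounded_pos by blast
  have "norm w / B \<le> minkowski_fun \<Omega> w"
    unfolding minkowski_fun_def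
  proof (rule cInf_greatest)
    show "{r. 0 < r \<and> w \<in> (\<lambda>p. r *\<^sub>R p) ` \<Omega>} \<noteq> {}" using mk_set_ne[OF assms(1)] by auto
    fix r assume "r \<in> {r. 0 < r \<and> w \<in> (\<lambda>p. r *\<^sub>R p) ` \<Omega>}"
    then obtain p where p: "r > 0" "p \<in> \<Omega>" "w = r *\<^sub>R p" by auto
    have "norm w = r * norm p" using p by simp
    also have "\<dots> \<le> r * B" using p B by (simp add: mult_left_mono)
    finally show "norm w / B \<le> r" using B by (simp add: divide_le_eq mult.commute)
  qed
  moreover have "norm w / B > 0" using assms(3) B by simp
  ultimately show ?thesis by linarith
qed

lemma mk_scale:
  assumes "(0::real\<times>real) \<in> interior \<Omega>" "s > 0"
  shows "minkowski_fun \<Omega> (s *\<^sub>R w) = s * minkowski_fun \<Omega> w"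
proof -
  define A where "A = {r. 0 < r \<and> w \<in> (\<lambda>p. r *\<^sub>R p) ` \<Omega>}"
  have eq: "{r. 0 < r \<and> s *\<^sub>R w \<in> (\<lambda>p. r *\<^sub>R p) ` \<Omega>} = (\<lambda>r. s * r) ` A"
  proof (intro set_eqI iffI)
    fix r assume "r \<in> {r. 0 < r \<and> s *\<^sub>R w \<in> (\<lambda>p. r *\<^sub>R p) ` \<Omega>}"
    then obtain p where p: "r > 0" "p \<in> \<Omega>" "s *\<^sub>R w = r *\<^sub>R p" by auto
    have "w = (r/s) *\<^sub>R p" using p assms(2)
      by (metis (no_types, lifting) divide_inverse_commute inverse_eq_divide 
          less_numeral_extra(3) scaleR_scaleR vector_fraction_eq_iff)
    then have "r/s \<in> A" using p assms(2) by (auto simp: A_def)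
    then show "r \<in> (\<lambda>r. s * r) ` A" using assms(2) by (auto intro!: image_eqI[where x="r/s"])
  next
    fix r assume "r \<in> (\<lambda>r. s * r) ` A"
    then obtain u p where u: "r = s * u" "u > 0" "p \<in> \<Omega>" "w = u *\<^sub>R p" by (auto simp: A_def)
    then show "r \<in> {r. 0 < r \<and> s *\<^sub>R w \<in> (\<lambda>p. r *\<^sub>R p) ` \<Omega>}"
      using assms(2) by auto
  qed
  have Ane: "A \<noteq> {}" using mk_set_ne[OF assms(1)] by (auto simp: A_def)
  have Abd: "\<And>r. r \<in> A \<Longrightarrow> 0 \<le> r" by (auto simp: A_def)
  have "Inf ((\<lambda>r. s * r) ` A) = s * Inf A"
  proof (rule antisym)
    have "Inf ((\<lambda>r. s * r) ` A) \<le> s * r" if "r \<in> A" for r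
      by (rule cInf_lower) (use that Abd assms(2) in \<open>auto intro!: bdd_belowI[where m=0]\<close>)
    then have "Inf ((\<lambda>r. s * r) ` A) / s \<le> Inf A"
      using Ane assms(2) by (intro cInf_greatest) (auto simp: divide_le_eq mult.commute)
    then show "Inf ((\<lambda>r. s * r) ` A) \<le> s * Inf A" using assms(2) by (simp add: divide_le_eq mult.commute)
  next
    have "Inf A \<le> r" if "r \<in> A" for r
      by (rule cInf_lower) (use that Abd in \<open>auto intro!: bdd_belowI[where m=0]\<close>)
    then show "s * Inf A \<le> Inf ((\<lambda>r. s * r) ` A)"
      using Ane assms(2) by (intro cInf_greatest) auto
  qed
  then show ?thesis unfolding minkowski_fun_def eq A_def by simp
qed


lemma key_control:
  fixes \<Omega> :: "'n::finite \<Rightarrow> (real \<times> real) set" and \<mu> :: "real^'n \<Rightarrow> real"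
    and p q a0 b0 :: "real^'n" and i :: 'n
  assumes MA: "main_assumption \<Omega> \<mu>"
    and strict: "\<forall>l\<in>nonneg_orthant. \<forall>t>0. \<mu> l < \<mu> (l + t *\<^sub>R axis i 1)"
    and pi: "p $ i = 0" and qi: "q $ i = 0" and pq: "p \<noteq> 0 \<or> q \<noteq> 0"
    and U0: "(a0, b0) \<in> control_set \<Omega> \<mu>"
    and mx: "\<And>a b. (a, b) \<in> control_set \<Omega> \<mu> \<Longrightarrow> p \<bullet> a + q \<bullet> b \<le> p \<bullet> a0 + q \<bullet> b0"
  shows "a0 $ i = 0 \<and> b0 $ i = 0"
proof -
  let ?mk = "\<lambda>k w. minkowski_fun (\<Omega> k) w"
  let ?L = "\<lambda>a b::real^'n. (\<chi> k. ?mk k (a $ k, b $ k)) :: real^'n"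
  have int0: "\<And>k. (0::real\<times>real) \<in> interior (\<Omega> k)" and bnd: "\<And>k. bounded (\<Omega> k)"
    using MA by (auto simp: main_assumption_def compact_imp_bounded)
  have hom: "\<And>l t. l \<in> nonneg_orthant \<Longrightarrow> t \<ge> 0 \<Longrightarrow> \<mu> (t *\<^sub>R l) = t * \<mu> l"
    and mnn: "\<And>l. l \<in> nonneg_orthant \<Longrightarrow> 0 \<le> \<mu> l"
    and mpos: "\<And>l. l \<in> nonneg_orthant \<Longrightarrow> l \<noteq> 0 \<Longrightarrow> 0 < \<mu> l"
    using MA by (auto simp: main_assumption_def)
  have mz: "\<And>k. ?mk k (0,0) = 0" using mk_zero[OF int0] by (simp add: zero_prod_def)
  have Lorth: "?L a b \<in> nonneg_orthant" for a b
    by (simp add: nonneg_orthant_def mk_nonneg[OF int0])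
  have CS: "(a, b) \<in> control_set \<Omega> \<mu> \<longleftrightarrow> \<mu> (?L a b) \<le> 1" for a b
    by (simp add: control_set_def)
  have axorth: "axis j (1::real) \<in> nonneg_orthant" for j
    by (simp add: nonneg_orthant_def axis_def)
  obtain j where j: "(p $ j, q $ j) \<noteq> 0"
    using pq by (metis vec_eq_iff zero_index zero_prod_def prod.inject)
  define v where "v = (p $ j, q $ j)"
  define m where "m = ?mk j v"
  define e where "e = \<mu> (axis j 1)"
  have m0: "m \<ge> 0" unfolding m_def by (rule mk_nonneg[OF int0])
  have e0: "e \<ge> 0" unfolding e_def by (rule mnn[OF axorth])
  define \<epsilon> where "\<epsilon> = 1 / (1 + m * e)"
  have me: "m * e \<ge> 0" using m0 e0 by simp
  have eps: "\<epsilon> > 0" unfolding \<epsilon>_def using me by simp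
  have "?L (axis j (\<epsilon> * p $ j)) (axis j (\<epsilon> * q $ j)) = (\<epsilon> * m) *\<^sub>R axis j 1"
  proof (subst vec_eq_iff, intro allI)
    fix k show "?L (axis j (\<epsilon> * p $ j)) (axis j (\<epsilon> * q $ j)) $ k = ((\<epsilon> * m) *\<^sub>R axis j 1) $ k"
    proof (cases "k = j")
      case True
      have "(\<epsilon> * p $ j, \<epsilon> * q $ j) = \<epsilon> *\<^sub>R v" by (simp add: v_def)
      then show ?thesis using True mk_scale[OF int0 eps] by (simp add: m_def)
    next
      case False
      then show ?thesis by (simp add: axis_def mz)
    qed
  qed
  then have "\<mu> (?L (axis j (\<epsilon> * p $ j)) (axis j (\<epsilon> * q $ j))) = \<epsilon> * m * e"
    using hom[OF axorth, of "\<epsilon> * m" j] eps m0 by (simp add: e_def)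
  also have "\<dots> \<le> 1" unfolding \<epsilon>_def using me by (simp add: divide_le_eq)
  finally have "p \<bullet> axis j (\<epsilon> * p $ j) + q \<bullet> axis j (\<epsilon> * q $ j) \<le> p \<bullet> a0 + q \<bullet> b0"
    using CS mx by blast
  moreover have "p \<bullet> axis j (\<epsilon> * p $ j) + q \<bullet> axis j (\<epsilon> * q $ j) = \<epsilon> * ((p $ j)^2 + (q $ j)^2)"
    by (simp add: inner_axis power2_eq_square algebra_simps)
  moreover have "(p $ j)^2 + (q $ j)^2 > 0" using j by (auto simp: zero_prod_def add_pos_nonneg sum_power2_gt_zero_iff)
  moreover have "\<epsilon> * ((p $ j)^2 + (q $ j)^2) > 0" using eps calculation(3) by simp
  ultimately have H0: "p \<bullet> a0 + q \<bullet> b0 > 0" by linarith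
  show ?thesis
  proof (rule ccontr)
    assume nz: "\<not> (a0 $ i = 0 \<and> b0 $ i = 0)"
    define a' :: "real^'n" where "a' = (\<chi> k. if k = i then 0 else a0 $ k)"
    define b' :: "real^'n" where "b' = (\<chi> k. if k = i then 0 else b0 $ k)"
    define l0 where "l0 = ?L a0 b0"
    define l' where "l' = ?L a' b'"
    have l0i: "l0 $ i > 0" unfolding l0_def using nz mk_pos[OF int0 bnd] by (auto simp: zero_prod_def)
    have l'eq: "l0 = l' + (l0 $ i) *\<^sub>R axis i 1"
      by (auto simp: vec_eq_iff l0_def l'_def a'_def b'_def axis_def mz)
    have l'o: "l' \<in> nonneg_orthant" unfolding l'_def by (rule Lorth)
    have "\<mu> l' < \<mu> (l' + (l0 $ i) *\<^sub>R axis i 1)" using strict l'o l0i by blast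
    then have "\<mu> l' < \<mu> l0" using l'eq by simp
    also have "\<mu> l0 \<le> 1" using U0 CS l0_def by blast
    finally have ml'1: "\<mu> l' < 1" .
    have aeq: "a0 = a' + axis i (a0 $ i)" and beq: "b0 = b' + axis i (b0 $ i)"
      by (auto simp: vec_eq_iff a'_def b'_def axis_def)
    have Heq: "p \<bullet> a' + q \<bullet> b' = p \<bullet> a0 + q \<bullet> b0"
      by (subst aeq, subst beq) (simp add: inner_add_right inner_axis pi qi)
    show False
    proof (cases "\<mu> l' = 0")
      case True
      then have "l' = 0" using mpos[OF l'o] by (metis less_irrefl)
      have "(a' $ k, b' $ k) = 0" for k
      proof (rule ccontr)
        assume "(a' $ k, b' $ k) \<noteq> 0"
        then have "0 < ?mk k (a' $ k, b' $ k)" by (rule mk_pos[OF int0 bnd])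
        moreover have "?mk k (a' $ k, b' $ k) = l' $ k" by (simp add: l'_def)
        ultimately show False using \<open>l' = 0\<close> by simp
      qed
      then have "a' = 0" "b' = 0" by (auto simp: vec_eq_iff zero_prod_def)
      then show False using Heq H0 by simp
    next
      case False
      then have ml': "\<mu> l' > 0" using mnn[OF l'o] by simp
      define s where "s = 1 / \<mu> l'"
      have s0: "s > 0" and s1: "s > 1" using ml' ml'1 by (auto simp: s_def)
      have "?L (s *\<^sub>R a') (s *\<^sub>R b') = s *\<^sub>R l'"
      proof (subst vec_eq_iff, intro allI)
        fix k
        have "(s * a' $ k, s * b' $ k) = s *\<^sub>R (a' $ k, b' $ k)" by simp
        then have "?mk k (s * a' $ k, s * b' $ k) = s * ?mk k (a' $ k, b' $ k)"
          using mk_scale[OF int0 s0] by metis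
        then show "?L (s *\<^sub>R a') (s *\<^sub>R b') $ k = (s *\<^sub>R l') $ k"
          by (simp add: l'_def)
      qed
      then have "\<mu> (?L (s *\<^sub>R a') (s *\<^sub>R b')) = 1"
        using hom[OF l'o, of s] s0 ml' by (simp add: s_def)
      then have "(s *\<^sub>R a', s *\<^sub>R b') \<in> control_set \<Omega> \<mu>" using CS by simp
      then have "p \<bullet> (s *\<^sub>R a') + q \<bullet> (s *\<^sub>R b') \<le> p \<bullet> a0 + q \<bullet> b0"
        by (rule mx)
      then have "s * (p \<bullet> a0 + q \<bullet> b0) \<le> p \<bullet> a0 + q \<bullet> b0"
      proof -
        have "p \<bullet> (s *\<^sub>R a') + q \<bullet> (s *\<^sub>R b') = s * (p \<bullet> a' + q \<bullet> b')"
          by (simp add: inner_scaleR_right distrib_left)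
        then show ?thesis using Heq \<open>p \<bullet> (s *\<^sub>R a') + q \<bullet> (s *\<^sub>R b') \<le> p \<bullet> a0 + q \<bullet> b0\<close> by simp
      qed
      moreover have "1 * (p \<bullet> a0 + q \<bullet> b0) < s * (p \<bullet> a0 + q \<bullet> b0)"
        using s1 H0 by (intro mult_strict_right_mono) auto
      ultimately show False by simp
    qed
  qed
qed


lemma vnth_deriv:
  "(f has_vector_derivative f') F \<Longrightarrow> ((\<lambda>x. f x $ i) has_vector_derivative f' $ i) F"
  by (rule bounded_linear.has_vector_derivative[OF bounded_linear_vec_nth])

lemma comp_zero_const:
  fixes x :: "real \<Rightarrow> real^'n::finite"
  assumes L: "L-lipschitz_on {0..T} x" and N: "negligible N"
    and d: "\<And>s. s \<in> {0..T} - N \<Longrightarrow> x differentiable (at s within {0..T}) \<and>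
              vector_derivative x (at s within {0..T}) $ i = 0"
    and t: "t \<in> {0..T}"
  shows "x t $ i = x 0 $ i"
proof (rule zero_deriv_const[where L=L and N=N and T=T])
  show "L-lipschitz_on {0..T} (\<lambda>s. x s $ i)"
  proof (rule lipschitz_onI)
    show "0 \<le> L" using lipschitz_on_nonneg[OF L] .
    fix a b assume "a \<in> {0..T}" "b \<in> {0..T}"
    then show "dist (x a $ i) (x b $ i) \<le> L * dist a b"
      using lipschitz_onD[OF L] dist_vec_nth_le order_trans by metis
  qed
  show "negligible N" by (rule N)
  show "t \<in> {0..T}" by (rule t)
  fix s assume s: "s \<in> {0..T} - N"
  then have "(x has_vector_derivative vector_derivative x (at s within {0..T})) (at s within {0..T})"
    using d vector_derivative_works by blast
  from vnth_deriv[OF this, of i] d[OF s]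
  have "((\<lambda>s. x s $ i) has_vector_derivative 0) (at s within {0..T})" by simp
  then show "((\<lambda>s. x s $ i) has_derivative (\<lambda>h. 0)) (at s within {0..T})"
    by (simp add: has_vector_derivative_def)
qed

lemma support_zero:
  assumes "bounded \<Omega>" "(0::real\<times>real) \<in> interior \<Omega>" "support_fun \<Omega> v = 0"
  shows "v = 0"
proof (rule ccontr)
  assume v: "v \<noteq> 0"
  obtain e where e: "e > 0" "cball 0 e \<subseteq> \<Omega>" using assms(2) mem_interior_cball by blast
  define p where "p = (e / norm v) *\<^sub>R v"
  have "norm p = e" using v e by (simp add: p_def)
  then have pO: "p \<in> \<Omega>" using e by auto
  obtain B where B: "\<And>p. p \<in> \<Omega> \<Longrightarrow> norm p \<le> B" using assms(1) bounded_iff by blast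
  have bdd: "bdd_above ((\<lambda>p. v \<bullet> p) ` \<Omega>)"
  proof (rule bdd_aboveI2)
    fix p assume "p \<in> \<Omega>"
    then have "v \<bullet> p \<le> norm v * norm p" using norm_cauchy_schwarz by blast
    also have "\<dots> \<le> norm v * B" using B[OF \<open>p \<in> \<Omega>\<close>] by (simp add: mult_left_mono)
    finally show "v \<bullet> p \<le> norm v * B" .
  qed
  have "v \<bullet> p \<le> support_fun \<Omega> v"
    unfolding support_fun_def by (rule cSUP_upper[OF pO bdd])
  moreover have "v \<bullet> p = e * norm v"
    using v by (simp add: p_def inner_commute power2_norm_eq_inner[symmetric] power2_eq_square)
  moreover have "e * norm v > 0" using e v by simp
  ultimately show False using assms(3) by simp
qed

theorem mainTheorem5:
  fixes \<Omega> :: "'n::finite \<Rightarrow> (real \<times> real) set" and \<mu> :: "real^'n \<Rightarrow> real"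
    and T :: real and x y :: "real \<Rightarrow> real^'n" and z :: "real \<Rightarrow> real"
    and \<phi> \<psi> :: "real \<Rightarrow> real^'n" and \<gamma> :: real and i :: 'n
  assumes "main_assumption \<Omega> \<mu>"
    and "\<forall>l\<in>nonneg_orthant. \<forall>t>0. \<mu> l < \<mu> (l + t *\<^sub>R axis i 1)"
    and "pmp_solution \<Omega> \<mu> T x y z \<phi> \<psi> \<gamma>"
    and "\<forall>t\<in>{0..T}. support_fun (\<Omega> i)
            (\<phi> t $ i - (\<gamma>/2) * y t $ i, \<psi> t $ i + (\<gamma>/2) * x t $ i) = 0"
  shows "\<forall>t\<in>{0..T}. x t $ i = 0 \<and> y t $ i = 0"
proof -
  have int0: "(0::real\<times>real) \<in> interior (\<Omega> i)" and bnd: "bounded (\<Omega> i)"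
    using assms(1) by (auto simp: main_assumption_def compact_imp_bounded)
  have hg: "\<phi> t $ i = \<gamma>/2 * y t $ i \<and> \<psi> t $ i = -(\<gamma>/2) * x t $ i" if "t \<in> {0..T}" for t
  proof -
    have "(\<phi> t $ i - (\<gamma>/2) * y t $ i, \<psi> t $ i + (\<gamma>/2) * x t $ i) = 0"
      using support_zero[OF bnd int0] assms(4) that by blast
    then show ?thesis by (simp add: zero_prod_def)
  qed
  have adm: "admissible \<Omega> \<mu> T x y z" using assms(3) by (simp add: pmp_solution_def)
  obtain Lx Ly where Lx: "Lx-lipschitz_on {0..T} x" and Ly: "Ly-lipschitz_on {0..T} y"
    using adm by (auto simp: admissible_def)
  have x0: "x 0 = 0" and y0: "y 0 = 0" using adm by (auto simp: admissible_def)
  define dx where "dx t = vector_derivative x (at t within {0..T})" for t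
  define dy where "dy t = vector_derivative y (at t within {0..T})" for t
  define P1 where "P1 t \<longleftrightarrow> x differentiable (at t within {0..T}) \<and>
        y differentiable (at t within {0..T}) \<and> (dx t, dy t) \<in> control_set \<Omega> \<mu>" for t
  define P2 where "P2 t \<longleftrightarrow> (\<phi> has_vector_derivative (- (\<gamma>/2) *\<^sub>R dy t)) (at t within {0..T}) \<and>
        (\<psi> has_vector_derivative ((\<gamma>/2) *\<^sub>R dx t)) (at t within {0..T})" for t
  define P3 where "P3 t \<longleftrightarrow> (\<forall>(a, b)\<in>control_set \<Omega> \<mu>.
           hamiltonian (\<phi> t) (\<psi> t) \<gamma> (x t) (y t) a b \<le>
           hamiltonian (\<phi> t) (\<psi> t) \<gamma> (x t) (y t) (dx t) (dy t))" for t
  have AE1: "AE t in lebesgue. t \<in> {0..T} \<longrightarrow> P1 t"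
    using adm unfolding admissible_def P1_def dx_def dy_def by (auto elim!: AE_mp)
  have AE2: "AE t in lebesgue. t \<in> {0..T} \<longrightarrow> P2 t"
    using assms(3) unfolding pmp_solution_def P2_def dx_def dy_def by auto
  obtain c where "AE t in lebesgue. t \<in> {0..T} \<longrightarrow>
        hamiltonian (\<phi> t) (\<psi> t) \<gamma> (x t) (y t)
           (vector_derivative x (at t within {0..T})) (vector_derivative y (at t within {0..T})) = c \<and>
        (\<forall>(a, b)\<in>control_set \<Omega> \<mu>.
           hamiltonian (\<phi> t) (\<psi> t) \<gamma> (x t) (y t) a b \<le>
           hamiltonian (\<phi> t) (\<psi> t) \<gamma> (x t) (y t)
             (vector_derivative x (at t within {0..T})) (vector_derivative y (at t within {0..T})))"
    using assms(3) unfolding pmp_solution_def by blast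
  then have AE3: "AE t in lebesgue. t \<in> {0..T} \<longrightarrow> P3 t"
    unfolding P3_def dx_def dy_def by (auto elim!: AE_mp)
  have "AE t in lebesgue. t \<in> {0..T} \<longrightarrow> P1 t \<and> P2 t \<and> P3 t"
    using AE1 AE2 AE3 by eventually_elim auto
  then obtain N where N: "negligible N" and NN: "{t. \<not> (t \<in> {0..T} \<longrightarrow> P1 t \<and> P2 t \<and> P3 t)} \<subseteq> N"
    using eventually_ae_filter_negligible by metis
  have nonv: "\<phi> t \<noteq> 0 \<or> \<psi> t \<noteq> 0 \<or> \<gamma> \<noteq> 0" if "t \<in> {0..T}" for t
    using assms(3) that unfolding pmp_solution_def by blast
  show ?thesis
  proof (cases "T > 0")
    case False
    show ?thesis
    proof
      fix t assume "t \<in> {0..T}"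
      then have "t = 0" using False by auto
      then show "x t $ i = 0 \<and> y t $ i = 0" using x0 y0 by simp
    qed
  next
    case Tpos: True
    have zero: "dx t $ i = 0 \<and> dy t $ i = 0" if tN: "t \<in> {0..T} - N" for t
    proof -
      have tT: "t \<in> {0..T}" using tN by simp
      have P: "P1 t" "P2 t" "P3 t" using tN NN by auto
      show ?thesis
      proof (cases "\<gamma> = 0")
        case True
        show ?thesis
        proof (rule key_control[OF assms(1) assms(2)])
          show "\<phi> t $ i = 0" "\<psi> t $ i = 0" using hg[OF tT] True by simp_all
          show "\<phi> t \<noteq> 0 \<or> \<psi> t \<noteq> 0" using nonv[OF tT] True by simp
          show "(dx t, dy t) \<in> control_set \<Omega> \<mu>" using P(1) by (simp add: P1_def)
          fix a b assume "(a, b) \<in> control_set \<Omega> \<mu>"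
          then show "\<phi> t \<bullet> a + \<psi> t \<bullet> b \<le> \<phi> t \<bullet> dx t + \<psi> t \<bullet> dy t"
            using P(3) True by (auto simp: P3_def hamiltonian_def)
        qed
      next
        case False
        have cb: "cbox 0 T = {0..T}" by (simp add: cbox_interval)
        have ddx: "(x has_vector_derivative dx t) (at t within {0..T})"
          using P(1) vector_derivative_works unfolding P1_def dx_def by blast
        have ddy: "(y has_vector_derivative dy t) (at t within {0..T})"
          using P(1) vector_derivative_works unfolding P1_def dy_def by blast
        have a1: "((\<lambda>s. \<phi> s $ i) has_vector_derivative (- (\<gamma>/2) * dy t $ i)) (at t within {0..T})"
          using vnth_deriv[OF conjunct1[OF P(2)[unfolded P2_def]], of i] by simp
        have "((\<lambda>s. \<gamma>/2 * y s $ i) has_vector_derivative (\<gamma>/2 * dy t $ i)) (at t within {0..T})"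
          by (rule has_vector_derivative_mult_right[OF vnth_deriv[OF ddy]])
        then have a2: "((\<lambda>s. \<phi> s $ i) has_vector_derivative (\<gamma>/2 * dy t $ i)) (at t within {0..T})"
          by (rule has_vector_derivative_transform_within[where d=1]) (use tT hg in auto)
        have "- (\<gamma>/2) * dy t $ i = \<gamma>/2 * dy t $ i"
          by (rule vector_derivative_unique_within_closed_interval[of 0 T t])
             (use Tpos tT a1 a2 cb in auto)
        then have y1: "dy t $ i = 0" using False by simp
        have b1: "((\<lambda>s. \<psi> s $ i) has_vector_derivative ((\<gamma>/2) * dx t $ i)) (at t within {0..T})"
          using vnth_deriv[OF conjunct2[OF P(2)[unfolded P2_def]], of i] by simp
        have "((\<lambda>s. -(\<gamma>/2) * x s $ i) has_vector_derivative (-(\<gamma>/2) * dx t $ i)) (at t within {0..T})"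
          by (rule has_vector_derivative_mult_right[OF vnth_deriv[OF ddx]])
        then have b2: "((\<lambda>s. \<psi> s $ i) has_vector_derivative (-(\<gamma>/2) * dx t $ i)) (at t within {0..T})"
          by (rule has_vector_derivative_transform_within[where d=1]) (use tT hg in auto)
        have "(\<gamma>/2) * dx t $ i = -(\<gamma>/2) * dx t $ i"
          by (rule vector_derivative_unique_within_closed_interval[of 0 T t])
             (use Tpos tT b1 b2 cb in auto)
        then have x1: "dx t $ i = 0" using False by simp
        show ?thesis using x1 y1 by simp
      qed
    qed
    show ?thesis
    proof
      fix t assume t: "t \<in> {0..T}"
      have "x t $ i = x 0 $ i"
        by (rule comp_zero_const[OF Lx N _ t]) (use zero NN in \<open>auto simp: P1_def dx_def\<close>)
      moreover have "y t $ i = y 0 $ i"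
        by (rule comp_zero_const[OF Ly N _ t]) (use zero NN in \<open>auto simp: P1_def dy_def\<close>)
      ultimately show "x t $ i = 0 \<and> y t $ i = 0" using x0 y0 by simp
    qed
  qed
qed

end
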